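(* Let $C$ be a $d$-variate copula satisfying: (i) for every $j\in\{1,\dots,d\}$, $\dot C_j(\mathbf u)=\partial C(\mathbf u)/\partial u_j$ exists and is continuous on $V_j=\{\mathbf u\in[0,1]^d:u_j\in(0,1)\}$; (ii) for all $j_1,j_2\in\{1,\dots,d\}$, $\ddot C_{j_1j_2}(\mathbf u)=\partial^2C(\mathbf u)/\partial u_{j_1}\partial u_{j_2}$ exists and is continuous on $V_{j_1}\cap V_{j_2}$, and there is $K>0$ with $|\ddot C_{j_1j_2}(\mathbf u)|\le K\min\{1/(u_{j_1}(1-u_{j_1})),1/(u_{j_2}(1-u_{j_2}))\}$ for all $\mathbf u\in V_{j_1}\cap V_{j_2}$. Then $$\sup_{\mathbf u\in[0,1]^d}\Big|\int_{[0,1]^d}\{C(\mathbf w)-C(\mathbf u)\}\,\mathrm d\mu_{n,\mathbf u}(\mathbf w)\Big|=\mathrm O(n^{-1}\log n),\qquad n\to\infty.$$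
   Context: For $\mathbf u\in[0,1]^d$ and integer $n\ge1$, $\mu_{n,\mathbf u}$ is the law of $(S_1/n,\dots,S_d/n)$, where $S_1,\dots,S_d$ are independent and $S_j\sim\mathrm{Bin}(n,u_j)$. *)

theory Defs
  imports "HOL-Analysis.Analysis" "HOL-Probability.Probability" "HOL-Library.Landau_Symbols"
begin

text \<open>Points of [0,1]^d are vectors of type real^'d, with 'd a finite index type (d = CARD('d)).\<close>

definition unit_cube :: "(real^'d) set" where
  "unit_cube = {u. \<forall>i. 0 \<le> u$i \<and> u$i \<le> 1}"

definition vupd :: "real^'d \<Rightarrow> 'd \<Rightarrow> real \<Rightarrow> real^'d" where
  "vupd u j t = (\<chi> i. if i = j then t else u$i)"

definition C_volume :: "(real^'d \<Rightarrow> real) \<Rightarrow> real^'d \<Rightarrow> real^'d \<Rightarrow> real" where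
  "C_volume C a b = (\<Sum>S\<in>Pow (UNIV::'d set).
      (-1) ^ card (UNIV - S) * C (\<chi> i. if i \<in> S then b$i else a$i))"

definition copula :: "(real^'d \<Rightarrow> real) \<Rightarrow> bool" where
  "copula C \<longleftrightarrow>
     (\<forall>u\<in>unit_cube. 0 \<le> C u \<and> C u \<le> 1) \<and>
     (\<forall>u\<in>unit_cube. (\<exists>i. u$i = 0) \<longrightarrow> C u = 0) \<and>
     (\<forall>u\<in>unit_cube. \<forall>j. (\<forall>i. i \<noteq> j \<longrightarrow> u$i = 1) \<longrightarrow> C u = u$j) \<and>
     (\<forall>a\<in>unit_cube. \<forall>b\<in>unit_cube. (\<forall>i. a$i \<le> b$i) \<longrightarrow> C_volume C a b \<ge> 0)"

definition V :: "'d \<Rightarrow> (real^'d) set" where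
  "V j = {u \<in> unit_cube. 0 < u$j \<and> u$j < 1}"

definition partial :: "'d \<Rightarrow> (real^'d \<Rightarrow> real) \<Rightarrow> real^'d \<Rightarrow> real" where
  "partial j f u = deriv (\<lambda>t. f (vupd u j t)) (u$j)"

definition partial_exists :: "'d \<Rightarrow> (real^'d \<Rightarrow> real) \<Rightarrow> real^'d \<Rightarrow> bool" where
  "partial_exists j f u \<longleftrightarrow> (\<lambda>t. f (vupd u j t)) differentiable (at (u$j))"

text \<open>mu_{n,u}: law of (S_1/n,...,S_d/n), S_j ~ Bin(n,u_j) independent.\<close>
definition bin_vec_pmf :: "nat \<Rightarrow> real^'d \<Rightarrow> ('d::finite \<Rightarrow> nat) pmf" where
  "bin_vec_pmf n u = Pi_pmf UNIV 0 (\<lambda>j. binomial_pmf n (u$j))"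

definition bernstein_err :: "(real^'d::finite \<Rightarrow> real) \<Rightarrow> nat \<Rightarrow> real^'d \<Rightarrow> real" where
  "bernstein_err C n u = measure_pmf.expectation (bin_vec_pmf n u)
      (\<lambda>k. C (\<chi> j. real (k j) / real n) - C u)"

end

theory Submission
  imports Defs
begin

definition wts :: "nat \<Rightarrow> real \<Rightarrow> nat \<Rightarrow> real" where
  "wts n p k = real (n choose k) * p ^ k * (1 - p) ^ (n - k)"

lemma wts_nonneg: "p \<in> {0..1} \<Longrightarrow> wts n p k \<ge> 0"
  by (auto simp: wts_def)

lemma wts_sum0: "(\<Sum>k\<le>n. wts n p k) = 1"
proof -
  have "(\<Sum>k\<le>n. wts n p k) = (p + (1 - p)) ^ n"
    by (subst binomial_ring) (simp add: wts_def atLeast0AtMost mult_ac)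
  then show ?thesis by simp
qed

lemma wts_Suc: "wts (Suc m) p (Suc k) * real (Suc k) = real (Suc m) * p * wts m p k"
proof -
  have H: "real (Suc m choose Suc k) * real (Suc k) = real (Suc m) * real (m choose k)"
    using Suc_times_binomial[of k m] by (metis of_nat_mult mult.commute)
  have "wts (Suc m) p (Suc k) * real (Suc k) =
     (real (Suc m choose Suc k) * real (Suc k)) * p * (p ^ k * (1 - p) ^ (m - k))"
    unfolding wts_def by (simp only: power_Suc diff_Suc_Suc mult_ac)
  also have "\<dots> = real (Suc m) * p * wts m p k"
    unfolding H wts_def by (simp only: mult_ac)
  finally show ?thesis .
qed

lemma wts_sum1: "(\<Sum>k\<le>n. wts n p k * real k) = real n * p"
proof (cases n)
  case 0 then show ?thesis by simp
next
  case (Suc m)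
  have "(\<Sum>k\<le>Suc m. wts (Suc m) p k * real k) = (\<Sum>k\<le>m. wts (Suc m) p (Suc k) * real (Suc k))"
    by (simp only: sum.atMost_Suc_shift)
  also have "\<dots> = (\<Sum>k\<le>m. real (Suc m) * p * wts m p k)" by (simp only: wts_Suc)
  also have "\<dots> = real (Suc m) * p" by (simp only: sum_distrib_left[symmetric] wts_sum0)
  finally show ?thesis using Suc by simp
qed

lemma wts_sum2: "(\<Sum>k\<le>n. wts n p k * (real k * (real k - 1))) = real n * (real n - 1) * p^2"
proof (cases n)
  case 0 then show ?thesis by simp
next
  case (Suc m)
  have "(\<Sum>k\<le>Suc m. wts (Suc m) p k * (real k * (real k - 1))) =
        (\<Sum>k\<le>m. wts (Suc m) p (Suc k) * (real (Suc k) * (real (Suc k) - 1)))"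
    by (simp only: sum.atMost_Suc_shift)
  also have "\<dots> = (\<Sum>k\<le>m. (wts (Suc m) p (Suc k) * real (Suc k)) * real k)"
    by (intro sum.cong refl) (simp add: mult_ac)
  also have "\<dots> = (\<Sum>k\<le>m. real (Suc m) * p * (wts m p k * real k))" by (simp only: wts_Suc mult.assoc)
  also have "\<dots> = real (Suc m) * p * (real m * p)" by (simp only: sum_distrib_left[symmetric] wts_sum1)
  finally show ?thesis using Suc by (simp add: power2_eq_square algebra_simps)
qed

lemma wts_var: assumes "n \<ge> 1"
  shows "(\<Sum>k\<le>n. wts n p k * (real k / real n - p)^2) = p * (1 - p) / real n"
proof -
  have e: "wts n p k * (real k / real n - p)^2 =
     (wts n p k * (real k * (real k - 1)) + (1 - 2 * real n * p) * (wts n p k * real k)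
      + (real n * p)^2 * wts n p k) / (real n)^2" for k
    using assms by (simp add: field_simps power2_eq_square)
  have "(\<Sum>k\<le>n. wts n p k * (real k / real n - p)^2) =
     ((\<Sum>k\<le>n. wts n p k * (real k * (real k - 1))) + (1 - 2 * real n * p) * (\<Sum>k\<le>n. wts n p k * real k)
      + (real n * p)^2 * (\<Sum>k\<le>n. wts n p k)) / (real n)^2"
    unfolding e by (simp only: sum_divide_distrib[symmetric] sum.distrib sum_distrib_left)
  also have "\<dots> = p * (1 - p) / real n"
    unfolding wts_sum0 wts_sum1 wts_sum2 using assms by (simp add: field_simps power2_eq_square)
  finally show ?thesis .
qed

lemma wts_mean: assumes "n \<ge> 1"
  shows "(\<Sum>k\<le>n. wts n p k * (real k / real n)) = p"
proof -
  have "(\<Sum>k\<le>n. wts n p k * (real k / real n)) = (\<Sum>k\<le>n. wts n p k * real k) / real n"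
    by (simp add: sum_divide_distrib)
  then show ?thesis using assms by (simp add: wts_sum1)
qed

lemma expectation_binomial_wts:
  assumes "p \<in> {0..1}"
  shows "measure_pmf.expectation (binomial_pmf n p) f = (\<Sum>k\<le>n. wts n p k * f k)"
  using expectation_binomial_pmf'[OF assms, of n f] by (simp add: wts_def)



lemma mvt_between:
  fixes f f' :: "real \<Rightarrow> real"
  assumes "x \<noteq> y" and der: "\<And>t. min x y \<le> t \<Longrightarrow> t \<le> max x y \<Longrightarrow> DERIV f t :> f' t"
  shows "\<exists>z. min x y < z \<and> z < max x y \<and> f y - f x = (y - x) * f' z"
proof (cases "x < y")
  case True
  then show ?thesis using MVT2[OF True, of f f'] der by (auto simp: min_def max_def)
next
  case False
  then have yx: "y < x" using assms(1) by simp
  obtain z where "y < z" "z < x" "f x - f y = (x - y) * f' z"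
    using MVT2[OF yx, of f f'] der yx by (auto simp: min_def max_def)
  then show ?thesis using yx by (intro exI[of _ z]) (auto simp: min_def max_def algebra_simps)
qed

lemma deriv_bound_lip:
  fixes g :: "real \<Rightarrow> real"
  assumes D: "DERIV g u :> D" and u: "0 < u" "u < 1"
    and lip: "\<forall>s\<in>{0..1}. \<forall>t\<in>{0..1}. \<bar>g s - g t\<bar> \<le> \<bar>s - t\<bar>"
  shows "\<bar>D\<bar> \<le> 1"
proof -
  have lim: "((\<lambda>h. \<bar>(g (u + h) - g u) / h\<bar>) \<longlongrightarrow> \<bar>D\<bar>) (at 0)"
    using D unfolding DERIV_def by (intro tendsto_rabs)
  have ev: "eventually (\<lambda>h. \<bar>(g (u + h) - g u) / h\<bar> \<le> 1) (at (0::real))"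
    unfolding eventually_at
  proof (intro exI[of _ "min u (1 - u)"] conjI ballI impI)
    show "0 < min u (1 - u)" using u by simp
    fix h :: real assume h: "h \<noteq> 0 \<and> dist h 0 < min u (1 - u)"
    then have "u + h \<in> {0..1}" using u by (auto simp: dist_real_def)
    then have "\<bar>g (u + h) - g u\<bar> \<le> \<bar>h\<bar>" using lip u by (metis add_diff_cancel_left' atLeastAtMost_iff less_le)
    then show "\<bar>(g (u + h) - g u) / h\<bar> \<le> 1" using h by (simp add: abs_divide divide_le_eq_1)
  qed
  show ?thesis by (rule tendsto_upperbound[OF lim ev]) simp
qed

lemma wts_0: "wts n 0 k = (if k = 0 then 1 else 0)"
  by (simp add: wts_def)

lemma wts_1: "k \<le> n \<Longrightarrow> wts n 1 k = (if k = n then 1 else 0)"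
  by (auto simp: wts_def)

lemma one_dim:
  fixes g g1 g2 :: "real \<Rightarrow> real"
  assumes K: "K \<ge> 0"
    and lip: "\<forall>s\<in>{0..1}. \<forall>t\<in>{0..1}. \<bar>g s - g t\<bar> \<le> \<bar>s - t\<bar>"
    and d1: "\<And>t. 0 < t \<Longrightarrow> t < 1 \<Longrightarrow> DERIV g t :> g1 t"
    and d2: "\<And>t. 0 < t \<Longrightarrow> t < 1 \<Longrightarrow> DERIV g1 t :> g2 t"
    and b2: "\<And>t. 0 < t \<Longrightarrow> t < 1 \<Longrightarrow> \<bar>g2 t\<bar> \<le> K / (t * (1 - t))"
    and u: "0 \<le> u" "u \<le> 1" and n: "n \<ge> 1"
  shows "\<bar>(\<Sum>k\<le>n. wts n u k * g (real k / real n)) - g u\<bar> \<le> (4 * K + 4) / real n"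
proof -
  have A0: "0 \<le> (4 * K + 4) / real n" using K n by simp
  consider "u = 0" | "u = 1" | "0 < u \<and> u < 1" using u by linarith
  then show ?thesis
  proof cases
    case 1
    have "(\<Sum>k\<le>n. wts n u k * g (real k / real n)) = (\<Sum>k\<le>n. if k = 0 then g 0 else 0)"
      by (intro sum.cong refl) (simp add: wts_0 1)
    then have "(\<Sum>k\<le>n. wts n u k * g (real k / real n)) = g u" using 1 by simp
    then show ?thesis using A0 by simp
  next
    case 2
    have "(\<Sum>k\<le>n. wts n u k * g (real k / real n)) = (\<Sum>k\<le>n. if k = n then g 1 else 0)"
      using 2 n by (intro sum.cong refl) (auto simp: wts_1)
    also have "\<dots> = g u" using 2 by simp
    finally show ?thesis using A0 by simp
  next
    case 3
    define h where "h = u * (1 - u)"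
    have h0: "h > 0" using 3 by (simp add: h_def)
    have hu: "h \<le> u" "h \<le> 1 - u" using 3 by (auto simp: h_def mult_le_cancel_left1 mult_le_cancel_right1)
    define A where "A = 4 * K + 4"
    define R where "R w = g w - g u - g1 u * (w - u)" for w
    have g1u: "\<bar>g1 u\<bar> \<le> 1" using deriv_bound_lip[OF d1 _ _ lip] 3 by auto
    have claim: "\<bar>R w\<bar> \<le> A * (w - u)^2 / h" if w: "0 \<le> w" "w \<le> 1" for w
    proof (cases "w < u / 2 \<or> 1 - w < (1 - u) / 2")
      case True
      have "\<bar>R w\<bar> \<le> \<bar>g w - g u\<bar> + \<bar>g1 u\<bar> * \<bar>w - u\<bar>"
        unfolding R_def by (metis abs_mult abs_triangle_ineq4 diff_diff_eq)
      also have "\<dots> \<le> 2 * \<bar>w - u\<bar>"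
      proof -
        have "\<bar>g w - g u\<bar> \<le> \<bar>w - u\<bar>" by (rule lip[rule_format]) (use w u in auto)
        then show ?thesis using mult_right_mono[OF g1u, of "\<bar>w - u\<bar>"] by simp
      qed
      also have "\<dots> \<le> 4 * (w - u)^2 / h"
      proof -
        have "h / 2 \<le> \<bar>w - u\<bar>"
          using True hu h0 3 by (cases "w \<le> u") (auto simp: abs_if)
        then have a: "h / 2 * \<bar>w - u\<bar> \<le> \<bar>w - u\<bar> * \<bar>w - u\<bar>"
          by (rule mult_right_mono) simp
        have b: "(w - u)^2 = \<bar>w - u\<bar> * \<bar>w - u\<bar>"
          by (simp add: power2_eq_square)
        have "h * (2 * \<bar>w - u\<bar>) \<le> 4 * (w - u)^2" using a unfolding b by simp
        then show ?thesis using h0 by (simp add: le_divide_eq mult.commute)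
      qed
      also have "\<dots> \<le> A * (w - u)^2 / h"
        using K h0 by (intro divide_right_mono mult_right_mono) (auto simp: A_def)
      finally show ?thesis .
    next
      case False
      show ?thesis
      proof (cases "w = u")
        case True then show ?thesis by (simp add: R_def)
      next
        case wu: False
        have inI: "0 < t \<and> t < 1 \<and> h / 4 \<le> t * (1 - t)" if "min u w \<le> t" "t \<le> max u w" for t
        proof -
          have t1: "u / 2 \<le> t" "(1 - u) / 2 \<le> 1 - t" using that False 3 by (auto simp: min_def max_def split: if_splits)
          have "(u / 2) * ((1 - u) / 2) \<le> t * (1 - t)"
            using t1 3 by (intro mult_mono) auto
          then show ?thesis using t1 3 by (auto simp: h_def)
        qed
        obtain xi where xi: "min u w < xi" "xi < max u w" "g w - g u = (w - u) * g1 xi"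
          using mvt_between[OF wu[symmetric], of g g1] d1 inI by auto
        have xu: "xi \<noteq> u" using xi by (auto simp: min_def max_def split: if_splits)
        obtain eta where eta: "min u xi < eta" "eta < max u xi" "g1 xi - g1 u = (xi - u) * g2 eta"
        proof -
          have "DERIV g1 t :> g2 t" if "min u xi \<le> t" "t \<le> max u xi" for t
          proof -
            have "min u w \<le> t" "t \<le> max u w" using that xi by (auto simp: min_def max_def split: if_splits)
            then show ?thesis using inI d2 by blast
          qed
          then show ?thesis using mvt_between[OF xu[symmetric], of g1 g2] that by blast
        qed
        have eI: "0 < eta \<and> eta < 1 \<and> h / 4 \<le> eta * (1 - eta)"
          using inI[of eta] eta xi by (auto simp: min_def max_def split: if_splits)
        have g2b: "\<bar>g2 eta\<bar> \<le> 4 * K / h"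
        proof -
          have "\<bar>g2 eta\<bar> \<le> K / (eta * (1 - eta))" using b2 eI by auto
          also have "\<dots> \<le> K / (h / 4)"
            using eI K h0 by (intro divide_left_mono) auto
          finally show ?thesis by (simp add: field_simps)
        qed
        have Rw: "R w = (w - u) * (xi - u) * g2 eta"
        proof -
          have "R w = (w - u) * (g1 xi - g1 u)" unfolding R_def using xi(3) by (simp add: algebra_simps)
          then show ?thesis using eta(3) by simp
        qed
        have wx: "\<bar>(w - u) * (xi - u)\<bar> \<le> (w - u)^2"
        proof -
          have "\<bar>xi - u\<bar> \<le> \<bar>w - u\<bar>" using xi by (auto simp: min_def max_def split: if_splits)
          then have "\<bar>w - u\<bar> * \<bar>xi - u\<bar> \<le> \<bar>w - u\<bar> * \<bar>w - u\<bar>" by (rule mult_left_mono) simp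
          then show ?thesis by (simp add: abs_mult power2_eq_square)
        qed
        have "\<bar>R w\<bar> = \<bar>(w - u) * (xi - u)\<bar> * \<bar>g2 eta\<bar>" by (simp add: Rw abs_mult)
        also have "\<dots> \<le> (w - u)^2 * (4 * K / h)"
          using wx g2b by (intro mult_mono) auto
        also have "\<dots> \<le> A * (w - u)^2 / h"
          using K h0 by (simp add: A_def field_simps)
        finally show ?thesis .
      qed
    qed
    have wn: "0 \<le> wts n u k" for k using u by (simp add: wts_nonneg)
    have "(\<Sum>k\<le>n. wts n u k * g (real k / real n)) - g u =
          (\<Sum>k\<le>n. wts n u k * (R (real k / real n) + g u + g1 u * (real k / real n - u))) - g u"
      by (simp add: R_def)
    also have "\<dots> = (\<Sum>k\<le>n. wts n u k * R (real k / real n)) + g u * (\<Sum>k\<le>n. wts n u k)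
            + g1 u * ((\<Sum>k\<le>n. wts n u k * (real k / real n)) - u * (\<Sum>k\<le>n. wts n u k)) - g u"
      by (simp add: algebra_simps sum.distrib sum_distrib_left sum_subtractf)
    also have "\<dots> = (\<Sum>k\<le>n. wts n u k * R (real k / real n))"
      using n by (simp only: wts_sum0 wts_mean) simp
    finally have eq: "(\<Sum>k\<le>n. wts n u k * g (real k / real n)) - g u = (\<Sum>k\<le>n. wts n u k * R (real k / real n))" .
    have "\<bar>\<Sum>k\<le>n. wts n u k * R (real k / real n)\<bar> \<le> (\<Sum>k\<le>n. wts n u k * \<bar>R (real k / real n)\<bar>)"
      by (rule order_trans[OF sum_abs]) (simp add: abs_mult wn)
    also have "\<dots> \<le> (\<Sum>k\<le>n. wts n u k * (A * (real k / real n - u)^2 / h))"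
      using n by (intro sum_mono mult_left_mono claim wn) auto
    also have "\<dots> = A / h * (\<Sum>k\<le>n. wts n u k * (real k / real n - u)^2)"
      by (simp add: sum_distrib_left mult_ac)
    also have "\<dots> = A / real n"
    proof -
      have "(\<Sum>k\<le>n. wts n u k * (real k / real n - u)^2) = h / real n"
        using wts_var[OF n] by (simp add: h_def)
      then show ?thesis using h0 by simp
    qed
    finally show ?thesis using eq by (simp add: A_def)
  qed
qed

lemma vupd_nth [simp]: "vupd u j t $ i = (if i = j then t else u $ i)"
  by (simp add: vupd_def)

lemma vupd_same [simp]: "vupd (vupd u j s) j t = vupd u j t"
  by (simp add: vec_eq_iff)

lemma vupd_self [simp]: "vupd u j (u $ j) = u"
  by (simp add: vec_eq_iff)

lemma vupd_comm: "j \<noteq> k \<Longrightarrow> vupd (vupd u j s) k t = vupd (vupd u k t) j s"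
  by (simp add: vec_eq_iff)

lemma cube_vupd: "u \<in> unit_cube \<Longrightarrow> 0 \<le> t \<Longrightarrow> t \<le> 1 \<Longrightarrow> vupd u j t \<in> unit_cube"
  by (simp add: unit_cube_def)

lemma vol_reduce:
  fixes C :: "real^'d::finite \<Rightarrow> real"
  assumes cop: "copula C" and a: "a \<in> unit_cube" and b: "b \<in> unit_cube"
    and a0: "\<And>i. i \<notin> J \<Longrightarrow> a $ i = 0"
  shows "C_volume C a b = (\<Sum>T\<in>Pow J. (-1) ^ card (J - T) * C (\<chi> i. if i \<in> T \<or> i \<notin> J then b$i else a$i))"
proof -
  have grounded: "\<And>v. v \<in> unit_cube \<Longrightarrow> (\<exists>i. v$i = 0) \<Longrightarrow> C v = 0"
    using cop unfolding copula_def by blast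
  let ?f = "\<lambda>S. (-1) ^ card (UNIV - S) * C (\<chi> i. if i \<in> S then b$i else a$i) :: real"
  have vc: "(\<chi> i. if i \<in> S then b$i else a$i) \<in> unit_cube" for S
    using a b by (auto simp: unit_cube_def)
  have "C_volume C a b = (\<Sum>S\<in>Pow UNIV. ?f S)" by (simp add: C_volume_def)
  also have "\<dots> = (\<Sum>S\<in>{S. UNIV - J \<subseteq> S}. ?f S)"
  proof (rule sum.mono_neutral_right)
    show "\<forall>S\<in>Pow UNIV - {S. UNIV - J \<subseteq> S}. ?f S = 0"
    proof
      fix S assume "S \<in> Pow UNIV - {S. UNIV - J \<subseteq> S}"
      then obtain i where "i \<notin> J" "i \<notin> S" by auto
      then have "(\<chi> i. if i \<in> S then b$i else a$i) $ i = 0" using a0 by simp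
      then show "?f S = 0" using grounded[OF vc] by auto
    qed
  qed auto
  also have "\<dots> = (\<Sum>T\<in>Pow J. ?f (T \<union> (UNIV - J)))"
  proof (rule sum.reindex_bij_betw[symmetric])
    show "bij_betw (\<lambda>T. T \<union> (UNIV - J)) (Pow J) {S. UNIV - J \<subseteq> S}"
    proof (rule bij_betw_byWitness[where f' = "\<lambda>S. S \<inter> J"])
    qed auto
  qed
  also have "\<dots> = (\<Sum>T\<in>Pow J. (-1) ^ card (J - T) * C (\<chi> i. if i \<in> T \<or> i \<notin> J then b$i else a$i))"
  proof (intro sum.cong refl)
    fix T assume "T \<in> Pow J"
    have "UNIV - (T \<union> (UNIV - J)) = J - T" by auto
    then show "?f (T \<union> (UNIV - J)) = (-1) ^ card (J - T) * C (\<chi> i. if i \<in> T \<or> i \<notin> J then b$i else a$i)"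
      by simp
  qed
  finally show ?thesis .
qed

lemma cop_mono1:
  fixes C :: "real^'d::finite \<Rightarrow> real"
  assumes cop: "copula C" and z: "z \<in> unit_cube" and st: "0 \<le> s" "s \<le> t" "t \<le> 1"
  shows "C (vupd z j s) \<le> C (vupd z j t)"
proof -
  define a :: "real^'d" where "a = (\<chi> i. if i = j then s else 0)"
  define b where "b = vupd z j t"
  have ac: "a \<in> unit_cube" using st by (simp add: unit_cube_def a_def)
  have bc: "b \<in> unit_cube" using z st by (simp add: b_def cube_vupd)
  have ab: "\<forall>i. a$i \<le> b$i" using z st by (auto simp: a_def b_def unit_cube_def)
  have "0 \<le> C_volume C a b" using cop ac bc ab unfolding copula_def by blast
  also have "C_volume C a b = (\<Sum>T\<in>Pow {j}. (-1) ^ card ({j} - T) * C (\<chi> i. if i \<in> T \<or> i \<notin> {j} then b$i else a$i))"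
    by (rule vol_reduce[OF cop ac bc]) (simp add: a_def)
  also have "\<dots> = C b - C (vupd z j s)"
  proof -
    have "(\<chi> i. if i = j \<or> i \<noteq> j then b$i else a$i) = b" by (simp add: vec_eq_iff)
    moreover have "(\<chi> i. if i \<noteq> j then b$i else a$i) = vupd z j s" by (simp add: vec_eq_iff a_def b_def)
    moreover have "Pow {j} = {{}, {j}}" by blast
    ultimately show ?thesis by simp
  qed
  finally show ?thesis by (simp add: b_def)
qed

lemma cop_2inc:
  fixes C :: "real^'d::finite \<Rightarrow> real"
  assumes cop: "copula C" and z: "z \<in> unit_cube" and jk: "j \<noteq> k"
    and st1: "0 \<le> s1" "s1 \<le> t1" "t1 \<le> 1" and st2: "0 \<le> s2" "s2 \<le> t2" "t2 \<le> 1"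
  shows "C (vupd (vupd z j s1) k t2) + C (vupd (vupd z j t1) k s2)
       \<le> C (vupd (vupd z j t1) k t2) + C (vupd (vupd z j s1) k s2)"
proof -
  define a :: "real^'d" where "a = (\<chi> i. if i = j then s1 else if i = k then s2 else 0)"
  define b where "b = vupd (vupd z j t1) k t2"
  have ac: "a \<in> unit_cube" using st1 st2 by (simp add: unit_cube_def a_def)
  have bc: "b \<in> unit_cube" using z st1 st2 by (simp add: b_def cube_vupd)
  have ab: "\<forall>i. a$i \<le> b$i" using z st1 st2 jk by (auto simp: a_def b_def unit_cube_def)
  have "0 \<le> C_volume C a b" using cop ac bc ab unfolding copula_def by blast
  also have "C_volume C a b = (\<Sum>T\<in>Pow {j,k}. (-1) ^ card ({j,k} - T) * C (\<chi> i. if i \<in> T \<or> i \<notin> {j,k} then b$i else a$i))"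
    by (rule vol_reduce[OF cop ac bc]) (simp add: a_def)
  also have "\<dots> = C (vupd (vupd z j t1) k t2) - C (vupd (vupd z j s1) k t2) - C (vupd (vupd z j t1) k s2)
       + C (vupd (vupd z j s1) k s2)"
  proof -
    have P: "Pow {j,k} = {{}, {j}, {k}, {j,k}}" by blast
    have d: "{} \<notin> {{j}, {k}, {j, k}}" "{j} \<notin> {{k}, {j, k}}" "{k} \<notin> {{j, k}}"
      using jk by auto
    have c: "card ({j,k} - {}) = 2" "card ({j,k} - {j}) = 1" "card ({j,k} - {k}) = 1" "card ({j,k} - {j,k}) = 0"
      using jk by (auto simp: insert_Diff_if)
    have v: "(\<chi> i. if i \<in> {} \<or> i \<notin> {j,k} then b$i else a$i) = vupd (vupd z j s1) k s2"
      "(\<chi> i. if i \<in> {j} \<or> i \<notin> {j,k} then b$i else a$i) = vupd (vupd z j t1) k s2"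
      "(\<chi> i. if i \<in> {k} \<or> i \<notin> {j,k} then b$i else a$i) = vupd (vupd z j s1) k t2"
      "(\<chi> i. if i \<in> {j,k} \<or> i \<notin> {j,k} then b$i else a$i) = vupd (vupd z j t1) k t2"
      using jk by (auto simp: vec_eq_iff a_def b_def)
    have gen: "\<And>F::'d set \<Rightarrow> real. (\<Sum>T\<in>{{}, {j}, {k}, {j,k}}. F T) = F {} + F {j} + F {k} + F {j,k}"
      using d by (simp add: add.assoc)
    show ?thesis unfolding P gen c v by simp
  qed
  finally show ?thesis by simp
qed

definition ones :: "'d set \<Rightarrow> real^'d \<Rightarrow> real^'d" where
  "ones A z = (\<chi> i. if i \<in> A then 1 else z$i)"

lemma cop_lip1:
  fixes C :: "real^'d::finite \<Rightarrow> real"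
  assumes cop: "copula C" and z: "z \<in> unit_cube" and st: "0 \<le> s" "s \<le> t" "t \<le> 1"
  shows "C (vupd z j t) - C (vupd z j s) \<le> t - s"
proof -
  define D where "D w = C (vupd w j t) - C (vupd w j s)" for w
  have oc: "ones A z \<in> unit_cube" for A using z by (simp add: ones_def unit_cube_def)
  have step: "finite A \<Longrightarrow> j \<notin> A \<Longrightarrow> D z \<le> D (ones A z)" for A
  proof (induction A rule: finite_induct)
    case empty
    have "ones {} z = z" by (simp add: ones_def vec_eq_iff)
    then show ?case by simp
  next
    case (insert k A)
    let ?w = "ones A z"
    have jk: "j \<noteq> k" using insert by auto
    have wk: "0 \<le> ?w $ k" "?w $ k \<le> 1" using oc[of A] by (auto simp: unit_cube_def)
    have e: "ones (insert k A) z = vupd ?w k 1" by (simp add: vec_eq_iff ones_def)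
    have "C (vupd (vupd ?w j s) k 1) + C (vupd (vupd ?w j t) k (?w $ k))
       \<le> C (vupd (vupd ?w j t) k 1) + C (vupd (vupd ?w j s) k (?w $ k))"
      using cop_2inc[OF cop oc jk st(1,2,3) wk(1) wk(2) order_refl] .
    moreover have "vupd (vupd ?w j t) k (?w $ k) = vupd ?w j t"
      "vupd (vupd ?w j s) k (?w $ k) = vupd ?w j s"
      using jk by (simp_all add: vec_eq_iff)
    moreover have "vupd (vupd ?w j t) k 1 = vupd (vupd ?w k 1) j t"
      "vupd (vupd ?w j s) k 1 = vupd (vupd ?w k 1) j s"
      using jk by (simp_all add: vupd_comm)
    ultimately have "D ?w \<le> D (vupd ?w k 1)" by (simp add: D_def)
    then show ?case using insert e by simp
  qed
  have "D z \<le> D (ones (UNIV - {j}) z)" by (rule step) auto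
  also have "D (ones (UNIV - {j}) z) = t - s"
  proof -
    have marg: "\<And>v. v \<in> unit_cube \<Longrightarrow> (\<forall>i. i \<noteq> j \<longrightarrow> v$i = 1) \<Longrightarrow> C v = v$j"
      using cop unfolding copula_def by blast
    have "C (vupd (ones (UNIV - {j}) z) j r) = r" if "0 \<le> r" "r \<le> 1" for r
    proof -
      have "vupd (ones (UNIV - {j}) z) j r \<in> unit_cube" by (rule cube_vupd[OF oc that])
      moreover have "\<forall>i. i \<noteq> j \<longrightarrow> vupd (ones (UNIV - {j}) z) j r $ i = 1" by (simp add: ones_def)
      ultimately show ?thesis using marg[of "vupd (ones (UNIV - {j}) z) j r"] by simp
    qed
    then show ?thesis using st by (simp add: D_def)
  qed
  finally show ?thesis by (simp add: D_def)
qed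

lemma cop_lip:
  fixes C :: "real^'d::finite \<Rightarrow> real"
  assumes cop: "copula C" and z: "z \<in> unit_cube"
  shows "\<forall>s\<in>{0..1}. \<forall>t\<in>{0..1}. \<bar>C (vupd z j s) - C (vupd z j t)\<bar> \<le> \<bar>s - t\<bar>"
proof (intro ballI)
  fix s t :: real assume s: "s \<in> {0..1}" and t: "t \<in> {0..1}"
  show "\<bar>C (vupd z j s) - C (vupd z j t)\<bar> \<le> \<bar>s - t\<bar>"
  proof (cases "s \<le> t")
    case True
    then show ?thesis using cop_lip1[OF cop z, of s t j] cop_mono1[OF cop z, of s t j] s t by auto
  next
    case False
    then show ?thesis using cop_lip1[OF cop z, of t s j] cop_mono1[OF cop z, of t s j] s t by auto
  qed
qed

lemma pmf_exp_abs_bound: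
  fixes f :: "'a \<Rightarrow> real"
  assumes fin: "finite (set_pmf p)" and b: "\<And>x. x \<in> set_pmf p \<Longrightarrow> \<bar>f x\<bar> \<le> c"
  shows "\<bar>measure_pmf.expectation p f\<bar> \<le> c"
proof -
  have "measure_pmf.expectation p f = (\<Sum>a\<in>set_pmf p. f a * pmf p a)"
    by (rule integral_measure_pmf_real[OF fin]) auto
  also have "\<bar>\<dots>\<bar> \<le> (\<Sum>a\<in>set_pmf p. \<bar>f a\<bar> * pmf p a)"
    by (rule order_trans[OF sum_abs]) (simp add: abs_mult)
  also have "\<dots> \<le> (\<Sum>a\<in>set_pmf p. c * pmf p a)"
    by (intro sum_mono mult_right_mono b) auto
  also have "\<dots> = c" using sum_pmf_eq_1[OF fin order_refl] by (simp add: sum_distrib_left[symmetric])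
  finally show ?thesis .
qed

lemma exp_pair_swap:
  fixes F :: "'a \<times> 'b \<Rightarrow> real"
  assumes fp: "finite (set_pmf p)" and fq: "finite (set_pmf q)"
  shows "measure_pmf.expectation (pair_pmf p q) F =
         measure_pmf.expectation q (\<lambda>b. measure_pmf.expectation p (\<lambda>a. F (a, b)))"
proof -
  have "measure_pmf.expectation (pair_pmf p q) F = (\<Sum>z\<in>set_pmf p \<times> set_pmf q. F z * pmf (pair_pmf p q) z)"
    by (rule integral_measure_pmf_real) (use fp fq in auto)
  also have "\<dots> = (\<Sum>a\<in>set_pmf p. \<Sum>b\<in>set_pmf q. F (a, b) * (pmf p a * pmf q b))"
    by (subst sum.cartesian_product) (auto intro!: sum.cong simp: pmf_pair)
  also have "\<dots> = (\<Sum>b\<in>set_pmf q. (\<Sum>a\<in>set_pmf p. F (a, b) * pmf p a) * pmf q b)"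
    by (subst sum.swap) (simp add: sum_distrib_right sum_distrib_left mult_ac)
  also have "\<dots> = (\<Sum>b\<in>set_pmf q. measure_pmf.expectation p (\<lambda>a. F (a, b)) * pmf q b)"
    by (intro sum.cong refl arg_cong2[where f = "(*)"] integral_measure_pmf_real[symmetric]) (use fp in auto)
  also have "\<dots> = measure_pmf.expectation q (\<lambda>b. measure_pmf.expectation p (\<lambda>a. F (a, b)))"
    by (rule integral_measure_pmf_real[symmetric]) (use fq in auto)
  finally show ?thesis .
qed

lemma set_bin_vec:
  assumes u: "u \<in> unit_cube"
  shows "set_pmf (Pi_pmf A 0 (\<lambda>j. binomial_pmf n (u$j))) \<subseteq> {k. \<forall>j. k j \<le> n}"
    and "finite (set_pmf (Pi_pmf (A::'d::finite set) 0 (\<lambda>j. binomial_pmf n (u$j))))"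
proof -
  have uj: "u$j \<in> {0..1}" for j using u by (simp add: unit_cube_def)
  have sub: "set_pmf (Pi_pmf A 0 (\<lambda>j. binomial_pmf n (u$j))) \<subseteq> PiE_dflt A 0 (set_pmf \<circ> (\<lambda>j. binomial_pmf n (u$j)))"
    by (rule set_Pi_pmf_subset') simp
  have bs: "set_pmf (binomial_pmf n (u$j)) \<subseteq> {..n}" for j
    using uj[of j] by (auto simp: set_pmf_binomial_eq split: if_splits)
  show "set_pmf (Pi_pmf A 0 (\<lambda>j. binomial_pmf n (u$j))) \<subseteq> {k. \<forall>j. k j \<le> n}"
  proof
    fix k assume "k \<in> set_pmf (Pi_pmf A 0 (\<lambda>j. binomial_pmf n (u$j)))"
    then have k: "k \<in> PiE_dflt A 0 (set_pmf \<circ> (\<lambda>j. binomial_pmf n (u$j)))" using sub by blast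
    have "k j \<le> n" for j
    proof (cases "j \<in> A")
      case True
      then have "k j \<in> set_pmf (binomial_pmf n (u$j))" using k by (auto simp: PiE_dflt_def)
      then show ?thesis using bs[of j] by auto
    next
      case False
      then show ?thesis using k by (auto simp: PiE_dflt_def)
    qed
    then show "k \<in> {k. \<forall>j. k j \<le> n}" by simp
  qed
  show "finite (set_pmf (Pi_pmf (A::'d::finite set) 0 (\<lambda>j. binomial_pmf n (u$j))))"
    by (rule finite_subset[OF sub]) (intro finite_PiE_dflt, auto intro: finite_set_pmf_binomial_pmf[OF uj])
qed

lemma coord_step:
  fixes C :: "real^'d::finite \<Rightarrow> real"
  assumes cop: "copula C"
    and d1: "\<And>j. \<forall>u\<in>V j. partial_exists j C u"
    and d2: "\<And>j1 j2. \<forall>u\<in>V j1 \<inter> V j2. partial_exists j2 (partial j1 C) u"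
    and K0: "K \<ge> 0"
    and K: "\<forall>j1 j2. \<forall>u\<in>V j1 \<inter> V j2.
              \<bar>partial j2 (partial j1 C) u\<bar> \<le>
                K * min (1 / (u$j1 * (1 - u$j1))) (1 / (u$j2 * (1 - u$j2)))"
    and z: "z \<in> unit_cube" and n: "n \<ge> 1"
  shows "\<bar>(\<Sum>k\<le>n. wts n (z$x) k * C (vupd z x (real k / real n))) - C z\<bar> \<le> (4 * K + 4) / real n"
proof -
  have inV: "vupd z x t \<in> V x" if "0 < t" "t < 1" for t
    using that z by (simp add: V_def cube_vupd)
  have D1: "DERIV (\<lambda>t. C (vupd z x t)) t :> partial x C (vupd z x t)" if "0 < t" "t < 1" for t
  proof -
    have "partial_exists x C (vupd z x t)" using d1 inV[OF that] by blast
    then have "(\<lambda>s. C (vupd z x s)) differentiable (at t)" by (simp add: partial_exists_def)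
    then show ?thesis by (simp add: partial_def DERIV_deriv_iff_real_differentiable)
  qed
  have D2: "DERIV (\<lambda>t. partial x C (vupd z x t)) t :> partial x (partial x C) (vupd z x t)"
    if "0 < t" "t < 1" for t
  proof -
    have "partial_exists x (partial x C) (vupd z x t)" using d2 inV[OF that] by blast
    then have "(\<lambda>s. partial x C (vupd z x s)) differentiable (at t)" by (simp add: partial_exists_def)
    then show ?thesis by (simp add: partial_def[of x "partial x C"] DERIV_deriv_iff_real_differentiable)
  qed
  have B2: "\<bar>partial x (partial x C) (vupd z x t)\<bar> \<le> K / (t * (1 - t))" if "0 < t" "t < 1" for t
  proof -
    have "\<bar>partial x (partial x C) (vupd z x t)\<bar> \<le>
       K * min (1 / (vupd z x t $ x * (1 - vupd z x t $ x))) (1 / (vupd z x t $ x * (1 - vupd z x t $ x)))"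
      using K inV[OF that] by blast
    then show ?thesis by simp
  qed
  have zx: "0 \<le> z$x" "z$x \<le> 1" using z by (auto simp: unit_cube_def)
  from one_dim[OF K0 cop_lip[OF cop z, of x] D1 D2 B2 zx n]
  show ?thesis by simp
qed

lemma multi:
  fixes C :: "real^'d::finite \<Rightarrow> real"
  assumes cop: "copula C"
    and d1: "\<And>j. \<forall>u\<in>V j. partial_exists j C u"
    and d2: "\<And>j1 j2. \<forall>u\<in>V j1 \<inter> V j2. partial_exists j2 (partial j1 C) u"
    and K0: "K \<ge> 0"
    and K: "\<forall>j1 j2. \<forall>u\<in>V j1 \<inter> V j2.
              \<bar>partial j2 (partial j1 C) u\<bar> \<le>
                K * min (1 / (u$j1 * (1 - u$j1))) (1 / (u$j2 * (1 - u$j2)))"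
    and u: "u \<in> unit_cube" and n: "n \<ge> 1"
    and B: "finite B"
  shows "\<bar>measure_pmf.expectation (bin_vec_pmf n u)
            (\<lambda>k. C (\<chi> i. if i \<in> B then real (k i) / real n else u$i)) - C u\<bar>
         \<le> real (card B) * ((4 * K + 4) / real n)"
  using B
proof (induction B rule: finite_induct)
  case empty
  have "(\<chi> i. u$i) = u" by (simp add: vec_eq_iff)
  then show ?case by simp
next
  case (insert x B)
  define p where "p = (\<lambda>j. binomial_pmf n (u$j))"
  define P where "P = bin_vec_pmf n u"
  define Q where "Q = Pi_pmf (UNIV - {x}) 0 p"
  define mix where "mix A k = (\<chi> i. if i \<in> A then real (k i) / real n else u$i)" for A and k :: "'d \<Rightarrow> nat"
  define M where "M = (4 * K + 4) / real n"
  have uj: "u$j \<in> {0..1}" for j using u by (simp add: unit_cube_def)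
  have PQ: "P = map_pmf (\<lambda>(y,f). f(x:=y)) (pair_pmf (p x) Q)"
  proof -
    have "P = Pi_pmf (insert x (UNIV - {x})) 0 p"
      by (simp add: P_def bin_vec_pmf_def p_def insert_UNIV)
    also have "\<dots> = map_pmf (\<lambda>(y,f). f(x:=y)) (pair_pmf (p x) Q)"
      unfolding Q_def by (rule Pi_pmf_insert) auto
    finally show ?thesis .
  qed
  have finP: "finite (set_pmf P)" using set_bin_vec(2)[OF u, of UNIV n] by (simp add: P_def bin_vec_pmf_def)
  have finQ: "finite (set_pmf Q)" using set_bin_vec(2)[OF u, of "UNIV - {x}" n] by (simp add: Q_def p_def)
  have finp: "finite (set_pmf (p x))" using uj[of x] by (auto simp: p_def)
  have mixc: "mix A k \<in> unit_cube" if "\<forall>j. k j \<le> n" for A k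
    using that u n by (auto simp: mix_def unit_cube_def divide_le_eq_1)
  have "\<bar>measure_pmf.expectation P (\<lambda>k. C (mix (insert x B) k) - C (mix B k))\<bar> \<le> M"
  proof -
    have "measure_pmf.expectation P (\<lambda>k. C (mix (insert x B) k) - C (mix B k)) =
      measure_pmf.expectation (pair_pmf (p x) Q) (\<lambda>(y,f). C (mix (insert x B) (f(x:=y))) - C (mix B (f(x:=y))))"
      unfolding PQ by (simp add: split_def)
    also have "\<dots> = measure_pmf.expectation Q (\<lambda>f. measure_pmf.expectation (p x)
        (\<lambda>y. C (mix (insert x B) (f(x:=y))) - C (mix B (f(x:=y)))))"
      by (subst exp_pair_swap[OF finp finQ]) simp
    also have "\<bar>\<dots>\<bar> \<le> M"
    proof (rule pmf_exp_abs_bound[OF finQ])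
      fix f assume f: "f \<in> set_pmf Q"
      then have fn: "\<forall>j. f j \<le> n" using set_bin_vec(1)[OF u, of "UNIV - {x}" n] by (auto simp: Q_def p_def)
      define z where "z = mix B f"
      have zc: "z \<in> unit_cube" using mixc[OF fn] by (simp add: z_def)
      have zx: "z$x = u$x" using insert by (simp add: z_def mix_def)
      have e1: "mix B (f(x:=y)) = z" for y using insert by (simp add: z_def mix_def vec_eq_iff)
      have e2: "mix (insert x B) (f(x:=y)) = vupd z x (real y / real n)" for y
        using insert by (simp add: z_def mix_def vec_eq_iff)
      have "measure_pmf.expectation (p x) (\<lambda>y. C (mix (insert x B) (f(x:=y))) - C (mix B (f(x:=y))))
          = (\<Sum>k\<le>n. wts n (z$x) k * (C (vupd z x (real k / real n)) - C z))"
        unfolding e1 e2 p_def zx by (rule expectation_binomial_wts[OF uj])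
      also have "\<dots> = (\<Sum>k\<le>n. wts n (z$x) k * C (vupd z x (real k / real n))) - C z"
        by (simp add: right_diff_distrib sum_subtractf sum_distrib_right[symmetric] wts_sum0)
      finally show "\<bar>measure_pmf.expectation (p x) (\<lambda>y. C (mix (insert x B) (f(x:=y))) - C (mix B (f(x:=y))))\<bar> \<le> M"
        using coord_step[OF cop d1 d2 K0 K zc n, of x] by (simp add: M_def)
    qed
    finally show ?thesis .
  qed
  moreover have "\<bar>measure_pmf.expectation P (\<lambda>k. C (mix B k)) - C u\<bar> \<le> real (card B) * M"
    using insert.IH by (simp add: P_def mix_def M_def)
  moreover have "measure_pmf.expectation P (\<lambda>k. C (mix (insert x B) k)) - C u =
      measure_pmf.expectation P (\<lambda>k. C (mix (insert x B) k) - C (mix B k))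
      + (measure_pmf.expectation P (\<lambda>k. C (mix B k)) - C u)"
    by (subst Bochner_Integration.integral_diff) (auto intro: integrable_measure_pmf_finite[OF finP])
  ultimately have "\<bar>measure_pmf.expectation P (\<lambda>k. C (mix (insert x B) k)) - C u\<bar> \<le> M + real (card B) * M"
    by linarith
  moreover have "real (card (insert x B)) * M = M + real (card B) * M" using insert by (simp add: algebra_simps)
  ultimately have "\<bar>measure_pmf.expectation P (\<lambda>k. C (mix (insert x B) k)) - C u\<bar> \<le> real (card (insert x B)) * M"
    by simp
  then show ?case by (simp only: P_def mix_def M_def)
qed

lemma bigo_from_bound:
  fixes f :: "nat \<Rightarrow> real"
  assumes b: "\<And>n. n \<ge> 3 \<Longrightarrow> \<bar>f n\<bar> \<le> M / real n" and M0: "M \<ge> 0"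
  shows "f \<in> O(\<lambda>n. ln (real n) / real n)"
proof (rule bigoI[where c = M])
  show "\<forall>\<^sub>F n in at_top. norm (f n) \<le> M * norm (ln (real n) / real n)"
    unfolding eventually_at_top_linorder
  proof (intro exI[of _ "3::nat"] allI impI)
    fix n :: nat assume n3: "n \<ge> 3"
    have ln1: "1 \<le> ln (real n)"
    proof -
      have "real n \<ge> 3" using n3 by simp
      then have e: "exp 1 \<le> real n" using exp_le by linarith
      have "ln (exp 1) \<le> ln (real n)" using e n3 by (subst ln_le_cancel_iff) auto
      then show ?thesis by simp
    qed
    have "M * 1 \<le> M * ln (real n)" by (rule mult_left_mono[OF ln1 M0])
    then have "(M * 1) / real n \<le> (M * ln (real n)) / real n" by (rule divide_right_mono) simp
    then have mm: "M / real n \<le> M * (ln (real n) / real n)" by simp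
    have l0: "\<bar>ln (real n)\<bar> = ln (real n)" using ln1 by simp
    show "norm (f n) \<le> M * norm (ln (real n) / real n)"
      using b[OF n3] mm by (simp add: l0)
  qed
qed

lemma ne1: "(\<chi> i. (0::real)) \<in> (unit_cube :: (real^'d::finite) set)"
  unfolding unit_cube_def by simp

theorem lemma2:
  fixes C :: "real^'d::finite \<Rightarrow> real"
  assumes cop: "copula C"
    and d1: "\<And>j. \<forall>u\<in>V j. partial_exists j C u"
    and d1c: "\<And>j. continuous_on (V j) (partial j C)"
    and d2: "\<And>j1 j2. \<forall>u\<in>V j1 \<inter> V j2. partial_exists j2 (partial j1 C) u"
    and d2c: "\<And>j1 j2. continuous_on (V j1 \<inter> V j2) (partial j2 (partial j1 C))"
    and K: "\<exists>K>0. \<forall>j1 j2. \<forall>u\<in>V j1 \<inter> V j2.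
              \<bar>partial j2 (partial j1 C) u\<bar> \<le>
                K * min (1 / (u$j1 * (1 - u$j1))) (1 / (u$j2 * (1 - u$j2)))"
  shows "(\<lambda>n. SUP u\<in>unit_cube. \<bar>bernstein_err C n u\<bar>) \<in> O(\<lambda>n. ln (real n) / real n)"
proof -
  obtain K where KK: "K > 0 \<and> (\<forall>j1 j2. \<forall>u\<in>V j1 \<inter> V j2.
              \<bar>partial j2 (partial j1 C) u\<bar> \<le>
                K * min (1 / (u$j1 * (1 - u$j1))) (1 / (u$j2 * (1 - u$j2))))"
    using K by (rule exE)
  note K0 = conjunct1[OF KK] and Kb = conjunct2[OF KK]
  define M where "M = real CARD('d) * (4 * K + 4)"
  have M0: "M \<ge> 0" using K0 by (simp add: M_def)
  have bnd: "\<bar>bernstein_err C n u\<bar> \<le> M / real n" if u: "u \<in> unit_cube" and n: "n \<ge> 1" for u n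
  proof -
    have fin: "finite (set_pmf (bin_vec_pmf n u))"
      using set_bin_vec(2)[OF u, of UNIV n] by (simp add: bin_vec_pmf_def)
    have "bernstein_err C n u = measure_pmf.expectation (bin_vec_pmf n u)
            (\<lambda>k. C (\<chi> i. if i \<in> UNIV then real (k i) / real n else u$i)) - C u"
      unfolding bernstein_err_def
      by (subst Bochner_Integration.integral_diff) (auto intro: integrable_measure_pmf_finite[OF fin])
    also have "\<bar>\<dots>\<bar> \<le> real (card (UNIV :: 'd set)) * ((4 * K + 4) / real n)"
      by (rule multi[OF cop d1 d2 _ Kb u n]) (use K0 in auto)
    finally show ?thesis by (simp only: M_def times_divide_eq_right)
  qed
  have ne: "(unit_cube :: (real^'d) set) \<noteq> {}"
    using ne1 by blast
  show ?thesis
  proof (rule bigo_from_bound[OF _ M0])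
    fix n :: nat assume n3: "n \<ge> 3"
    then have n1: "n \<ge> 1" by simp
    have le: "(SUP u\<in>unit_cube. \<bar>bernstein_err C n u\<bar>) \<le> M / real n"
      by (rule cSUP_least[OF ne]) (use bnd n1 in auto)
    have bdd: "bdd_above ((\<lambda>u. \<bar>bernstein_err C n u\<bar>) ` unit_cube)"
      by (rule bdd_aboveI2[where M = "M / real n"]) (use bnd n1 in auto)
    have ge: "0 \<le> (SUP u\<in>unit_cube. \<bar>bernstein_err C n u\<bar>)"
      using cSUP_upper[OF ne1 bdd] by linarith
    show "\<bar>SUP u\<in>unit_cube. \<bar>bernstein_err C n u\<bar>\<bar> \<le> M / real n"
      using le ge by simp
  qed
qed

end
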